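(* Let $C$ be a $d$-dimensional rational convex polyhedral cone with $C\cap(-C)=\{0\}$, $d\ge2$, and $P$ its face poset. Then $$Q(P,t):=(1-t)^{-1}\big(G(P,t)-t^{d-1}G(P,t^{-1})\big)$$ is a polynomial in $t$ satisfying (i) $Q(P,t)=t^{d-2}Q(P,t^{-1})$ and (ii) $\tau_{\le(d-2)/2}Q(P,t)=\tau_{\le(d-2)/2}H(P,t)$; that is, $H_{\rm Lef}(P,t)=(1-t)^{-1}\big(G(P,t)-t^{d-1}G(P,t^{-1})\big)$.
   Context: The face poset $P$ of $C$, ordered by inclusion, is an Eulerian poset of rank $d$: a finite poset with least element $\hat0=\{0\}$ and greatest element $\hat1=C$, all maximal chains of length $d$, rank function $\rho(x)=\dim$ of the face, Möbius function $\mu(x,y)=(-1)^{\rho(y)-\rho(x)}$; intervals $[x,y]$ are Eulerian of rank $\rho(y)-\rho(x)$. For Eulerian $Q'$ of rank $e$: $G=H=1$ if $e=0$; for $e>0$, $H(Q',t)=\sum_{\hat0<x\le\hat1}(t-1)^{\rho(x)-1}G([x,\hat1],t)$ and $G(Q',t)=\tau_{<e/2}((1-t)H(Q',t))$, where $\tau_{<r}(\sum a_it^i)=\sum_{i<r}a_it^i$ and $\tau_{\le r}$ keeps the terms of degree $\le r$. $H_{\rm Lef}(P,t)$ denotes the polynomial of degree $d-2$ characterized by (i) $H_{\rm Lef}(P,t)=t^{d-2}H_{\rm Lef}(P,t^{-1})$ and (ii) $\tau_{\le(d-2)/2}H_{\rm Lef}(P,t)=\tau_{\le(d-2)/2}H(P,t)$.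 *)

theory Defs
  imports "HOL-Analysis.Analysis" "HOL-Computational_Algebra.Polynomial"
begin

definition tau_lt :: "real \<Rightarrow> real poly \<Rightarrow> real poly" where
  "tau_lt r p = (\<Sum>i\<in>{i. i \<le> degree p \<and> real i < r}. monom (coeff p i) i)"

definition tau_le :: "real \<Rightarrow> real poly \<Rightarrow> real poly" where
  "tau_le r p = (\<Sum>i\<in>{i. i \<le> degree p \<and> real i \<le> r}. monom (coeff p i) i)"

text \<open>Toric H-polynomial of an interval [x,y] of a graded poset (carrier P, order le,
  rank rk), computed with a fuel parameter n; the G-polynomial of a subinterval
  [z,y] of positive rank e is tau_lt (e/2) ((1-t) H([z,y])), and 1 for rank 0.
  With fuel equal to the rank of the interval (see H_int) this is exactly the
  recursive definition of the paper.\<close>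
fun hfuel :: "nat \<Rightarrow> 'a set \<Rightarrow> ('a \<Rightarrow> 'a \<Rightarrow> bool) \<Rightarrow> ('a \<Rightarrow> nat) \<Rightarrow> 'a \<Rightarrow> 'a \<Rightarrow> real poly" where
  "hfuel 0 P le rk x y = 1"
| "hfuel (Suc n) P le rk x y =
     (\<Sum>z\<in>{z\<in>P. le x z \<and> z \<noteq> x \<and> le z y}.
        [:-1, 1:] ^ (rk z - rk x - 1) *
        (if rk y - rk z = 0 then 1
         else tau_lt (real (rk y - rk z) / 2) ([:1, -1:] * hfuel n P le rk z y)))"

definition H_int :: "'a set \<Rightarrow> ('a \<Rightarrow> 'a \<Rightarrow> bool) \<Rightarrow> ('a \<Rightarrow> nat) \<Rightarrow> 'a \<Rightarrow> 'a \<Rightarrow> real poly" where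
  "H_int P le rk x y = hfuel (rk y - rk x) P le rk x y"

definition G_int :: "'a set \<Rightarrow> ('a \<Rightarrow> 'a \<Rightarrow> bool) \<Rightarrow> ('a \<Rightarrow> nat) \<Rightarrow> 'a \<Rightarrow> 'a \<Rightarrow> real poly" where
  "G_int P le rk x y =
     (if rk y - rk x = 0 then 1
      else tau_lt (real (rk y - rk x) / 2) ([:1, -1:] * H_int P le rk x y))"

definition rational_poly_cone :: "(real^'n) set \<Rightarrow> bool" where
  "rational_poly_cone C \<longleftrightarrow>
     (\<exists>S. finite S \<and> (\<forall>v\<in>S. \<forall>i. v $ i \<in> \<rat>) \<and> C = convex_cone hull S)"

definition face_poset :: "(real^'n) set \<Rightarrow> (real^'n) set set" where
  "face_poset C = {F. F face_of C \<and> F \<noteq> {}}"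

definition face_rank :: "(real^'n) set \<Rightarrow> nat" where
  "face_rank F = nat (aff_dim F)"

definition G_face :: "(real^'n) set \<Rightarrow> real poly" where
  "G_face C = G_int (face_poset C) (\<subseteq>) face_rank {0} C"

definition H_face :: "(real^'n) set \<Rightarrow> real poly" where
  "H_face C = H_int (face_poset C) (\<subseteq>) face_rank {0} C"

end

theory Submission
  imports Defs
begin

lemma coeff_tau_lt: "coeff (tau_lt r p) n = (if real n < r then coeff p n else 0)"
proof -
  have "coeff (tau_lt r p) n = (\<Sum>i\<in>{i. i \<le> degree p \<and> real i < r}. if n = i then coeff p i else 0)"
    unfolding tau_lt_def by (simp add: coeff_sum coeff_monom)
  also have "\<dots> = (if n \<in> {i. i \<le> degree p \<and> real i < r} then coeff p n else 0)"
    by (rule sum.delta', rule finite_subset[of _ "{..degree p}"]) auto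
  finally show ?thesis by (auto simp: coeff_eq_0)
qed

lemma coeff_tau_le: "coeff (tau_le r p) n = (if real n \<le> r then coeff p n else 0)"
proof -
  have "coeff (tau_le r p) n = (\<Sum>i\<in>{i. i \<le> degree p \<and> real i \<le> r}. if n = i then coeff p i else 0)"
    unfolding tau_le_def by (simp add: coeff_sum coeff_monom)
  also have "\<dots> = (if n \<in> {i. i \<le> degree p \<and> real i \<le> r} then coeff p n else 0)"
    by (rule sum.delta', rule finite_subset[of _ "{..degree p}"]) auto
  finally show ?thesis by (auto simp: coeff_eq_0)
qed

lemma geom_sum_ab: "a \<le> b \<Longrightarrow> (1 - t) * (\<Sum>k\<in>{a..<b}. (t::real) ^ k) = t ^ a - t ^ b"
proof (induction b)
  case 0
  then show ?case by simp
next
  case (Suc b)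
  show ?case
  proof (cases "a = Suc b")
    case True
    then show ?thesis by simp
  next
    case False
    then have "a \<le> b" using Suc.prems by simp
    then have "(1 - t) * (\<Sum>k\<in>{a..<Suc b}. t ^ k) = (1 - t) * (\<Sum>k\<in>{a..<b}. t ^ k) + (1 - t) * t ^ b"
      by (simp add: distrib_left)
    also have "\<dots> = t ^ a - t ^ Suc b" using Suc.IH[OF \<open>a \<le> b\<close>] by (simp add: algebra_simps)
    finally show ?thesis .
  qed
qed

lemma geom_sym:
  assumes "a + b = Suc n" "(t::real) \<noteq> 0"
  shows "t ^ n * (\<Sum>k\<in>{a..<b}. (1 / t) ^ k) = (\<Sum>k\<in>{a..<b}. t ^ k)"
proof -
  have "t ^ n * (\<Sum>k\<in>{a..<b}. (1 / t) ^ k) = (\<Sum>k\<in>{a..<b}. t ^ (n - k))"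
    unfolding sum_distrib_left
  proof (rule sum.cong[OF refl])
    fix k assume "k \<in> {a..<b}"
    then have "k \<le> n" using assms by auto
    then have "n = (n - k) + k" by simp
    then have "t ^ n = t ^ (n - k) * t ^ k" by (metis power_add)
    then show "t ^ n * (1 / t) ^ k = t ^ (n - k)" using assms(2) by (simp add: power_one_over field_simps)
  qed
  also have "\<dots> = (\<Sum>k\<in>{a..<b}. t ^ k)"
    by (rule sum.reindex_bij_witness[where i="\<lambda>k. n - k" and j="\<lambda>k. n - k"]) (use assms in auto)
  finally show ?thesis .
qed

lemma main_formal:
  fixes H :: "real poly" and d :: nat
  assumes "d \<ge> 2"
  defines "G \<equiv> tau_lt (real d / 2) ([:1, -1:] * H)"
  shows "\<exists>Q :: real poly.
           (\<forall>t::real. t \<noteq> 0 \<and> t \<noteq> 1 \<longrightarrow>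
              poly Q t = (poly G t - t ^ (d - 1) * poly G (1 / t)) / (1 - t))
         \<and> (\<forall>t::real. t \<noteq> 0 \<longrightarrow> poly Q t = t ^ (d - 2) * poly Q (1 / t))
         \<and> tau_le (real (d - 2) / 2) Q = tau_le (real (d - 2) / 2) H"
proof -
  define g where "g i = coeff ([:1, -1:] * H) i" for i
  define m where "m = (d + 1) div 2"
  have inI: "real i < real d / 2 \<longleftrightarrow> i < m" for i unfolding m_def by linarith
  have Geq: "G = (\<Sum>i<m. monom (g i) i)"
  proof (rule poly_eqI)
    fix n
    show "coeff G n = coeff (\<Sum>i<m. monom (g i) i) n"
      unfolding G_def coeff_tau_lt inI[of n] by (simp add: coeff_sum coeff_monom g_def)
  qed
  have polyG: "poly G t = (\<Sum>i<m. g i * t ^ i)" for t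
    by (simp add: Geq poly_sum poly_monom)
  have g0: "g 0 = coeff H 0" and gS: "g (Suc i) = coeff H (Suc i) - coeff H i" for i
    by (simp_all add: g_def mult_pCons_left)
  have tel: "(\<Sum>i\<le>j. g i) = coeff H j" for j
    by (induction j) (simp_all add: g0 gS)
  have im: "i < m \<Longrightarrow> i + i < d" for i unfolding m_def by auto
  define Q where "Q = (\<Sum>i<m. \<Sum>k\<in>{i..<d - 1 - i}. monom (g i) k)"
  have polyQ: "poly Q t = (\<Sum>i<m. g i * (\<Sum>k\<in>{i..<d - 1 - i}. t ^ k))" for t
    by (simp add: Q_def poly_sum poly_monom sum_distrib_left)
  show ?thesis
  proof (intro exI conjI allI impI)
    fix t :: real assume t: "t \<noteq> 0 \<and> t \<noteq> 1"
    have "(1 - t) * poly Q t = (\<Sum>i<m. g i * (t ^ i - t ^ (d - 1 - i)))"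
      unfolding polyQ sum_distrib_left[of "1 - t"]
    proof (rule sum.cong[OF refl])
      fix i assume "i \<in> {..<m}"
      then have "i \<le> d - 1 - i" using im[of i] by auto
      then have e: "(1 - t) * (\<Sum>k\<in>{i..<d - 1 - i}. t ^ k) = t ^ i - t ^ (d - 1 - i)"
        by (rule geom_sum_ab)
      show "(1 - t) * (g i * (\<Sum>k\<in>{i..<d - 1 - i}. t ^ k)) = g i * (t ^ i - t ^ (d - 1 - i))"
        by (subst e[symmetric]) (simp only: mult.left_commute)
    qed
    also have "\<dots> = poly G t - t ^ (d - 1) * poly G (1 / t)"
      unfolding polyG sum_distrib_left sum_subtractf[symmetric]
    proof (rule sum.cong[OF refl])
      fix i assume "i \<in> {..<m}"
      then have "i \<le> d - 1" using im[of i] by auto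
      then have "d - 1 = (d - 1 - i) + i" by simp
      then have "t ^ (d - 1) = t ^ (d - 1 - i) * t ^ i" by (metis power_add)
      then show "g i * (t ^ i - t ^ (d - 1 - i)) = g i * t ^ i - t ^ (d - 1) * (g i * (1 / t) ^ i)"
        using t by (simp add: power_one_over field_simps)
    qed
    finally show "poly Q t = (poly G t - t ^ (d - 1) * poly G (1 / t)) / (1 - t)"
      using t by (simp add: field_simps)
  next
    fix t :: real assume t: "t \<noteq> 0"
    show "poly Q t = t ^ (d - 2) * poly Q (1 / t)"
      unfolding polyQ sum_distrib_left[of "t ^ (d - 2)"]
    proof (rule sum.cong[OF refl])
      fix i assume "i \<in> {..<m}"
      then have "i + (d - 1 - i) = Suc (d - 2) \<or> d - 1 - i \<le> i" using im[of i] assms(1) by auto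
      then show "g i * (\<Sum>k\<in>{i..<d - 1 - i}. t ^ k) = t ^ (d - 2) * (g i * (\<Sum>k\<in>{i..<d - 1 - i}. (1 / t) ^ k))"
        using geom_sym[of i "d - 1 - i" "d - 2" t] t by auto
    qed
  next
    show "tau_le (real (d - 2) / 2) Q = tau_le (real (d - 2) / 2) H"
    proof (rule poly_eqI)
      fix j
      show "coeff (tau_le (real (d - 2) / 2) Q) j = coeff (tau_le (real (d - 2) / 2) H) j"
      proof (cases "real j \<le> real (d - 2) / 2")
        case False
        then show ?thesis by (simp add: coeff_tau_le)
      next
        case True
        then have j2: "j + j \<le> d - 2" by linarith
        have "coeff Q j = (\<Sum>i<m. if i \<le> j \<and> j < d - 1 - i then g i else 0)"
          by (simp add: Q_def coeff_sum coeff_monom sum.If_cases)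
        also have "\<dots> = (\<Sum>i<m. if i \<le> j then g i else 0)"
          by (rule sum.cong[OF refl]) (use j2 assms(1) in auto)
        also have "\<dots> = (\<Sum>i\<in>{..<m} \<inter> {..j}. g i)"
          by (simp add: sum.If_cases Int_def)
        also have "{..<m} \<inter> {..j} = {..j}" using j2 assms(1) unfolding m_def by auto
        finally have "coeff Q j = coeff H j" using tel by simp
        then show ?thesis using True by (simp add: coeff_tau_le)
      qed
    qed
  qed
qed

theorem proposition3p14:
  fixes C :: "(real^'n) set" and d :: nat
  assumes "rational_poly_cone C"
    and "C \<inter> uminus ` C = {0}"
    and "aff_dim C = int d"
    and "d \<ge> 2"
  shows "\<exists>Q :: real poly.
           (\<forall>t::real. t \<noteq> 0 \<and> t \<noteq> 1 \<longrightarrow>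
              poly Q t = (poly (G_face C) t - t ^ (d - 1) * poly (G_face C) (1 / t)) / (1 - t))
         \<and> (\<forall>t::real. t \<noteq> 0 \<longrightarrow> poly Q t = t ^ (d - 2) * poly Q (1 / t))
         \<and> tau_le (real (d - 2) / 2) Q = tau_le (real (d - 2) / 2) (H_face C)"
proof -
  have r1: "face_rank C = d" using assms(3) by (simp add: face_rank_def)
  have r0: "face_rank ({0} :: (real^'n) set) = 0" by (simp add: face_rank_def)
  have "G_face C = tau_lt (real d / 2) ([:1, -1:] * H_face C)"
    using assms(4) by (simp add: G_face_def G_int_def H_face_def r1 r0)
  then show ?thesis using main_formal[OF assms(4), of "H_face C"] by simp
qed

end
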